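(* Let $X$ be a real Banach space and $h:X\times X^*\to\mathbb{R}\cup\{\pm\infty\}$ a proper lower semicontinuous convex function. Then $D(\mathcal{J}\delta_{D(h)})\subseteq 0^+D(\mathcal{J}h)$.
   Context: $X$ is identified with its canonical image in $X^{**}$. $D(f)=\{z\;|\;f(z)<\infty\}$; $\delta_C$ is the indicator function of $C$ (0 on $C$, $+\infty$ elsewhere). For $g:X\times X^*\to\mathbb{R}\cup\{\pm\infty\}$, the conjugate is $g^*:X^*\times X^{**}\to\mathbb{R}\cup\{\pm\infty\}$, $g^*(x^*,x^{**})=\sup_{(y,y^* )\in X\times X^*}\langle y,x^*\rangle+\langle x^{**},y^*\rangle-g(y,y^* )$, and $(\mathcal{J}g)(x,x^* )=g^*(x^*,x)$. The recession cone of a set $C$ in a vector space is $0^+C=\{u\;|\;x+\lambda u\in C\ \forall x\in C,\ \forall\lambda\geq0\}$. *)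

theory Defs
  imports "HOL-Analysis.Analysis"
begin

(* Dual space X^* = bounded linear functionals 'a =>L real; bidual = (('a =>L real) =>L real);
   extended reals = ereal. *)

definition canon :: "'a::real_normed_vector \<Rightarrow> (('a \<Rightarrow>\<^sub>L real) \<Rightarrow>\<^sub>L real)" where
  "canon x = Blinfun (\<lambda>f. blinfun_apply f x)"

definition dom_f :: "('b \<Rightarrow> ereal) \<Rightarrow> 'b set" where
  "dom_f f = {z. f z < \<infinity>}"

definition indicator_e :: "'b set \<Rightarrow> 'b \<Rightarrow> ereal" where
  "indicator_e C z = (if z \<in> C then 0 else \<infinity>)"

definition fconj ::
  "('a::real_normed_vector \<times> ('a \<Rightarrow>\<^sub>L real) \<Rightarrow> ereal)
   \<Rightarrow> ('a \<Rightarrow>\<^sub>L real) \<times> (('a \<Rightarrow>\<^sub>L real) \<Rightarrow>\<^sub>L real) \<Rightarrow> ereal" where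
  "fconj g = (\<lambda>(xs, xss). SUP p\<in>UNIV.
      ereal (blinfun_apply xs (fst p) + blinfun_apply xss (snd p)) - g p)"

definition Jop ::
  "('a::real_normed_vector \<times> ('a \<Rightarrow>\<^sub>L real) \<Rightarrow> ereal) \<Rightarrow> 'a \<times> ('a \<Rightarrow>\<^sub>L real) \<Rightarrow> ereal" where
  "Jop g = (\<lambda>(x, xs). fconj g (xs, canon x))"

definition recession_cone :: "'b::real_vector set \<Rightarrow> 'b set" where
  "recession_cone C = {u. \<forall>x\<in>C. \<forall>t::real. t \<ge> 0 \<longrightarrow> x + t *\<^sub>R u \<in> C}"

definition proper_fun :: "('b \<Rightarrow> ereal) \<Rightarrow> bool" where
  "proper_fun f \<longleftrightarrow> (\<forall>z. f z \<noteq> -\<infinity>) \<and> (\<exists>z. f z < \<infinity>)"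

definition convex_fun :: "('b::real_vector \<Rightarrow> ereal) \<Rightarrow> bool" where
  "convex_fun f \<longleftrightarrow> convex {(z, r::real). f z \<le> ereal r}"

definition lsc_fun :: "('b::topological_space \<Rightarrow> ereal) \<Rightarrow> bool" where
  "lsc_fun f \<longleftrightarrow> (\<forall>z. \<forall>r. r < f z \<longrightarrow> eventually (\<lambda>w. r < f w) (nhds z))"

end

theory Submission
  imports Defs
begin

lemma canon_apply: "blinfun_apply (canon (x::'a::real_normed_vector)) f = blinfun_apply f x"
proof -
  have "bounded_linear (\<lambda>f. blinfun_apply f x)"
    by (rule bounded_linear_intro[where K="norm x"])
       (auto simp: blinfun.add_left blinfun.scaleR_left, metis mult.commute norm_blinfun)
  thus ?thesis unfolding canon_def by (simp add: bounded_linear_Blinfun_apply)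
qed

theorem proposition3p1:
  fixes h :: "'a::banach \<times> ('a \<Rightarrow>\<^sub>L real) \<Rightarrow> ereal"
  assumes "proper_fun h" and "lsc_fun h" and "convex_fun h"
  shows "dom_f (Jop (indicator_e (dom_f h))) \<subseteq> recession_cone (dom_f (Jop h))"
proof
  fix w assume w: "w \<in> dom_f (Jop (indicator_e (dom_f h)))"
  obtain u us where wu: "w = (u, us)" by force
  define B where "B = (SUP p\<in>UNIV. ereal (blinfun_apply us (fst p) + blinfun_apply (snd p) u)
      - indicator_e (dom_f h) p)"
  have Blt: "B < \<infinity>" using w unfolding wu dom_f_def Jop_def fconj_def B_def
    by (simp add: canon_apply)
  have Bp: "\<And>p. h p < \<infinity> \<Longrightarrow> ereal (blinfun_apply us (fst p) + blinfun_apply (snd p) u) \<le> B"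
  proof -
    fix p assume "h p < \<infinity>"
    hence "ereal (blinfun_apply us (fst p) + blinfun_apply (snd p) u)
      = ereal (blinfun_apply us (fst p) + blinfun_apply (snd p) u) - indicator_e (dom_f h) p"
      by (simp add: indicator_e_def dom_f_def)
    also have "\<dots> \<le> B" unfolding B_def by (rule SUP_upper) simp
    finally show "ereal (blinfun_apply us (fst p) + blinfun_apply (snd p) u) \<le> B" .
  qed
  obtain p0 where p0: "h p0 < \<infinity>" using assms(1) unfolding proper_fun_def by auto
  have "B \<noteq> -\<infinity>" using Bp[OF p0] by auto
  with Blt obtain b where b: "B = ereal b" by (cases B) auto
  show "w \<in> recession_cone (dom_f (Jop h))"
    unfolding recession_cone_def
  proof (intro CollectI ballI allI impI)
    fix z t assume z: "z \<in> dom_f (Jop h)" and t: "(0::real) \<le> t"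
    obtain x xs where zx: "z = (x, xs)" by force
    define A where "A = (SUP p\<in>UNIV. ereal (blinfun_apply xs (fst p) + blinfun_apply (snd p) x) - h p)"
    have Alt: "A < \<infinity>" using z unfolding zx dom_f_def Jop_def fconj_def A_def
      by (simp add: canon_apply)
    have "(SUP p\<in>UNIV. ereal (blinfun_apply (xs + t *\<^sub>R us) (fst p) + blinfun_apply (snd p) (x + t *\<^sub>R u)) - h p)
        \<le> A + ereal (t * b)"
    proof (rule SUP_least)
      fix p :: "'a \<times> ('a \<Rightarrow>\<^sub>L real)"
      show "ereal (blinfun_apply (xs + t *\<^sub>R us) (fst p) + blinfun_apply (snd p) (x + t *\<^sub>R u)) - h p
          \<le> A + ereal (t * b)"
      proof (cases "h p < \<infinity>")
        case False
        hence "h p = \<infinity>" by auto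
        thus ?thesis by simp
      next
        case True
        have "h p \<noteq> -\<infinity>" using assms(1) unfolding proper_fun_def by blast
        with True obtain r where r: "h p = ereal r" by (cases "h p") auto
        have ub: "blinfun_apply us (fst p) + blinfun_apply (snd p) u \<le> b"
          using Bp[OF True] b by simp
        have le: "ereal (blinfun_apply xs (fst p) + blinfun_apply (snd p) x) - h p \<le> A"
          unfolding A_def by (rule SUP_upper) simp
        hence le': "blinfun_apply xs (fst p) + blinfun_apply (snd p) x - r \<le> A" using r by simp
        have eq: "blinfun_apply (xs + t *\<^sub>R us) (fst p) + blinfun_apply (snd p) (x + t *\<^sub>R u) - r
          = (blinfun_apply xs (fst p) + blinfun_apply (snd p) x - r)
            + t * (blinfun_apply us (fst p) + blinfun_apply (snd p) u)"
          by (simp add: blinfun.add_left blinfun.scaleR_left blinfun.add_right blinfun.scaleR_right algebra_simps)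
        have tb: "t * (blinfun_apply us (fst p) + blinfun_apply (snd p) u) \<le> t * b"
          using ub t by (simp add: mult_left_mono)
        have "ereal (blinfun_apply (xs + t *\<^sub>R us) (fst p) + blinfun_apply (snd p) (x + t *\<^sub>R u)) - h p
          = ereal (blinfun_apply xs (fst p) + blinfun_apply (snd p) x - r)
            + ereal (t * (blinfun_apply us (fst p) + blinfun_apply (snd p) u))"
          using r eq by simp
        also have "\<dots> \<le> A + ereal (t * b)"
          using le' tb by (intro add_mono) auto
        finally show ?thesis .
      qed
    qed
    also have "\<dots> < \<infinity>" using Alt by simp
    finally show "z + t *\<^sub>R w \<in> dom_f (Jop h)"
      unfolding zx wu dom_f_def Jop_def fconj_def by (simp add: canon_apply)
  qed
qed

end
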